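(* Let $D$ be a domain in a metric measure space $(X,d,\mu)$ of finite Hausdorff dimension $\alpha\geqslant2$, let $x_0\in D$, and let $(X',d',\mu')$ be an Ahlfors $\alpha'$-regular metric measure space ($\alpha'\geqslant2$) supporting a $(1;\alpha')$-Poincaré inequality. Let $Q:D\to[0,\infty]$ be measurable and let $f:D\setminus\{x_0\}\to X'$ be a ring $Q$-mapping at $x_0$. Assume there exist $\varepsilon_0>0$ and a Lebesgue measurable $\psi:(0,\varepsilon_0)\to[0,\infty]$ such that for every $\varepsilon_2\in(0,\varepsilon_0]$ there is $\varepsilon_1\in(0,\varepsilon_2]$ with $0<I(\varepsilon,\varepsilon_2):=\int_\varepsilon^{\varepsilon_2}\psi(t)\,dt<\infty$ for every $\varepsilon\in(0,\varepsilon_1)$, and that $\int_{\varepsilon<d(x,x_0)<\varepsilon_0}Q(x)\psi^\alpha(d(x,x_0))\,d\mu(x)=o(I^\alpha(\varepsilon,\varepsilon_0))$ as $\varepsilon\to0$. Let $\Gamma$ be the family of all curves $\gamma:(0,1)\to D\setminus\{x_0\}$ such that $\gamma(t_k)\to x_0$ for some sequence $t_k\to0$. Then $M_{\alpha'}(f(\Gamma))=0$.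
   Context: $(X,d,\mu)$, $(X',d',\mu')$ are metric spaces with locally finite Borel measures. $B(x_0,r)=\{x:d(x,x_0)<r\}$, $S(x_0,r)=\{x:d(x,x_0)=r\}$, $A(x_0,r_1,r_2)=\{x:r_1<d(x,x_0)<r_2\}$. $\Gamma(E,F,H)$ is the family of continuous curves $\gamma:[0,1]\to X$ with $\gamma(0)\in E$, $\gamma(1)\in F$, $\gamma(t)\in H$ for $t\in(0,1)$. A Borel $\rho\geqslant0$ is admissible for a curve family $\Gamma$ if $\int_\gamma\rho\,ds\geqslant1$ for each locally rectifiable $\gamma\in\Gamma$; $M_{\alpha'}(\Gamma)=\inf_\rho\int_{X'}\rho^{\alpha'}d\mu'$. A mapping $f:G\to X'$ ($G=D\setminus\{x_0\}$) is a ring $Q$-mapping at $x_0$ if for all $0<r_1<r_2<\infty$ and every Lebesgue measurable $\eta:(r_1,r_2)\to[0,\infty]$ with $\int_{r_1}^{r_2}\eta\,dr\geqslant1$: $M_{\alpha'}(f(\Gamma(S(x_0,r_1),S(x_0,r_2),A(x_0,r_1,r_2))))\leqslant\int_{A(x_0,r_1,r_2)\cap G}Q(x)\eta^\alpha(d(x,x_0))\,d\mu(x)$ (only curves lying in $G$ are mapped). Ahlfors $\alpha'$-regular: $C^{-1}r^{\alpha'}\leqslant\mu'(B(y,r))\leqslant Cr^{\alpha'}$ for some $C\geqslant1$, all $y$, all $r<\operatorname{diam}X'$. $(1;p)$-Poincaré inequality: $\frac{1}{\mu'(B)}\int_B|u-u_B|d\mu'\leqslant C\operatorname{diam}(B)(\frac{1}{\mu'(B)}\int_B\rho^pd\mu')^{1/p}$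 for all balls $B$, bounded continuous $u$ on $B$ and upper gradients $\rho$ of $u$ (i.e. $|u(x)-u(y)|\leqslant\int_\gamma\rho\,ds$ for each rectifiable $\gamma$ joining $x,y$). *)

theory Defs
  imports "HOL-Analysis.Analysis"
begin

definition epowr :: "ennreal \<Rightarrow> real \<Rightarrow> ennreal" where
  "epowr x p = (if x = top then (if p > 0 then top else if p = 0 then 1 else 0)
                else ennreal (enn2real x powr p))"

definition ediam :: "'a::metric_space set \<Rightarrow> ennreal" where
  "ediam S = (SUP x\<in>S. SUP y\<in>S. ennreal (dist x y))"

definition hausdorff_pre :: "real \<Rightarrow> real \<Rightarrow> 'a::metric_space set \<Rightarrow> ennreal" where
  "hausdorff_pre s \<delta> E =
     (INF A \<in> {A :: nat \<Rightarrow> 'a set. E \<subseteq> (\<Union>i. A i) \<and> (\<forall>i. ediam (A i) \<le> ennreal \<delta>)}.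
        (\<Sum>i. epowr (ediam (A i)) s))"

definition hausdorff_measure :: "real \<Rightarrow> 'a::metric_space set \<Rightarrow> ennreal" where
  "hausdorff_measure s E = (SUP \<delta> \<in> {0<..}. hausdorff_pre s \<delta> E)"

definition hausdorff_dimension :: "'a::metric_space set \<Rightarrow> ereal" where
  "hausdorff_dimension E = Inf {ereal s | s. 0 \<le> s \<and> hausdorff_measure s E = 0}"

definition loc_finite_borel :: "'a::metric_space measure \<Rightarrow> bool" where
  "loc_finite_borel M \<longleftrightarrow> sets M = sets borel \<and>
     (\<forall>x. \<exists>r>0. emeasure M (ball x r) < \<infinity>)"

definition curve_length :: "(real \<Rightarrow> 'a::metric_space) \<Rightarrow> real \<Rightarrow> real \<Rightarrow> ennreal" where
  "curve_length \<gamma> a b =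
     (SUP (n, t) \<in> {(n, t :: nat \<Rightarrow> real). t 0 = a \<and> t n = b \<and> (\<forall>i<n. t i \<le> t (Suc i))}.
        (\<Sum>i<n. ennreal (dist (\<gamma> (t i)) (\<gamma> (t (Suc i))))))"

definition rectifiable_on :: "(real \<Rightarrow> 'a::metric_space) \<Rightarrow> real \<Rightarrow> real \<Rightarrow> bool" where
  "rectifiable_on \<gamma> a b \<longleftrightarrow> a \<le> b \<and> continuous_on {a..b} \<gamma> \<and> curve_length \<gamma> a b < \<infinity>"

definition loc_rectifiable :: "real set \<Rightarrow> (real \<Rightarrow> 'a::metric_space) \<Rightarrow> bool" where
  "loc_rectifiable I \<gamma> \<longleftrightarrow> continuous_on I \<gamma> \<and>
     (\<forall>a b. a \<le> b \<and> {a..b} \<subseteq> I \<longrightarrow> curve_length \<gamma> a b < \<infinity>)"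

definition line_integral_seg :: "('a::metric_space \<Rightarrow> ennreal) \<Rightarrow> (real \<Rightarrow> 'a) \<Rightarrow> real \<Rightarrow> real \<Rightarrow> ennreal" where
  "line_integral_seg \<rho> \<gamma> a b =
     (\<integral>\<^sup>+ t. indicator {a..b} t * \<rho> (\<gamma> t)
        \<partial>interval_measure (\<lambda>s. enn2real (curve_length \<gamma> a (max a (min b s)))))"

definition line_integral :: "real set \<Rightarrow> ('a::metric_space \<Rightarrow> ennreal) \<Rightarrow> (real \<Rightarrow> 'a) \<Rightarrow> ennreal" where
  "line_integral I \<rho> \<gamma> =
     (SUP (a, b) \<in> {(a, b). a \<le> b \<and> {a..b} \<subseteq> I}. line_integral_seg \<rho> \<gamma> a b)"

definition admissible :: "real set \<Rightarrow> (real \<Rightarrow> 'a::metric_space) set \<Rightarrow> ('a \<Rightarrow> ennreal) \<Rightarrow> bool" where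
  "admissible I \<Gamma> \<rho> \<longleftrightarrow> \<rho> \<in> borel_measurable borel \<and>
     (\<forall>\<gamma>\<in>\<Gamma>. loc_rectifiable I \<gamma> \<longrightarrow> line_integral I \<rho> \<gamma> \<ge> 1)"

definition modulus :: "'a::metric_space measure \<Rightarrow> real \<Rightarrow> real set \<Rightarrow> (real \<Rightarrow> 'a) set \<Rightarrow> ennreal" where
  "modulus M p I \<Gamma> = (INF \<rho> \<in> {\<rho>. admissible I \<Gamma> \<rho>}. \<integral>\<^sup>+ y. epowr (\<rho> y) p \<partial>M)"

definition curves_between :: "'a::metric_space set \<Rightarrow> 'a set \<Rightarrow> 'a set \<Rightarrow> (real \<Rightarrow> 'a) set" where
  "curves_between E F H = {\<gamma>. continuous_on {0..1} \<gamma> \<and> \<gamma> 0 \<in> E \<and> \<gamma> 1 \<in> F \<and>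
                              (\<forall>t\<in>{0<..<1}. \<gamma> t \<in> H)}"

definition sphere_at :: "'a::metric_space \<Rightarrow> real \<Rightarrow> 'a set" where
  "sphere_at x0 r = {x. dist x x0 = r}"

definition annulus :: "'a::metric_space \<Rightarrow> real \<Rightarrow> real \<Rightarrow> 'a set" where
  "annulus x0 r1 r2 = {x. r1 < dist x x0 \<and> dist x x0 < r2}"

definition ring_Q_mapping ::
  "'a::metric_space measure \<Rightarrow> real \<Rightarrow> 'b::metric_space measure \<Rightarrow> real \<Rightarrow>
   'a set \<Rightarrow> 'a \<Rightarrow> ('a \<Rightarrow> ennreal) \<Rightarrow> ('a \<Rightarrow> 'b) \<Rightarrow> bool" where
  "ring_Q_mapping \<mu> \<alpha> \<mu>' \<alpha>' D x0 Q f \<longleftrightarrow>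
     (\<forall>r1 r2 (\<eta> :: real \<Rightarrow> ennreal). 0 < r1 \<and> r1 < r2 \<and> \<eta> \<in> borel_measurable lebesgue \<and>
        (\<integral>\<^sup>+ r \<in> {r1<..<r2}. \<eta> r \<partial>lebesgue) \<ge> 1 \<longrightarrow>
        modulus \<mu>' \<alpha>' {0..1}
          ((\<lambda>\<gamma>. f \<circ> \<gamma>) ` {\<gamma> \<in> curves_between (sphere_at x0 r1) (sphere_at x0 r2) (annulus x0 r1 r2).
                              \<gamma> ` {0..1} \<subseteq> D - {x0}})
        \<le> (\<integral>\<^sup>+ x \<in> annulus x0 r1 r2 \<inter> (D - {x0}). Q x * epowr (\<eta> (dist x x0)) \<alpha> \<partial>\<mu>))"

definition ahlfors_regular :: "'b::metric_space measure \<Rightarrow> real \<Rightarrow> bool" where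
  "ahlfors_regular \<mu>' \<alpha>' \<longleftrightarrow> (\<exists>C\<ge>1. \<forall>y r. 0 < r \<and> ennreal r < ediam (UNIV :: 'b set) \<longrightarrow>
      ennreal (r powr \<alpha>' / C) \<le> emeasure \<mu>' (ball y r) \<and>
      emeasure \<mu>' (ball y r) \<le> ennreal (C * r powr \<alpha>'))"

definition upper_gradient_on :: "'b::metric_space set \<Rightarrow> ('b \<Rightarrow> real) \<Rightarrow> ('b \<Rightarrow> ennreal) \<Rightarrow> bool" where
  "upper_gradient_on B u \<rho> \<longleftrightarrow> \<rho> \<in> borel_measurable borel \<and>
     (\<forall>\<gamma>. rectifiable_on \<gamma> 0 1 \<and> \<gamma> ` {0..1} \<subseteq> B \<longrightarrow>
        ennreal \<bar>u (\<gamma> 0) - u (\<gamma> 1)\<bar> \<le> line_integral {0..1} \<rho> \<gamma>)"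

definition poincare_1p :: "'b::metric_space measure \<Rightarrow> real \<Rightarrow> bool" where
  "poincare_1p \<mu>' p \<longleftrightarrow> (\<exists>C>0. \<forall>z r u \<rho>.
     let B = ball z r; m = measure \<mu>' B;
         uB = (\<integral>x\<in>B. u x \<partial>\<mu>') / m in
     0 < r \<and> 0 < emeasure \<mu>' B \<and> emeasure \<mu>' B < \<infinity> \<and>
     continuous_on B u \<and> bounded (u ` B) \<and> upper_gradient_on B u \<rho> \<longrightarrow>
     ennreal ((\<integral>x\<in>B. \<bar>u x - uB\<bar> \<partial>\<mu>') / m)
       \<le> ennreal (C * enn2real (ediam B)) *
          epowr ((\<integral>\<^sup>+ x \<in> B. epowr (\<rho> x) p \<partial>\<mu>') / ennreal m) (1 / p))"

end

theory Submission
  imports Defs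
begin

definition imcond :: "(real \<Rightarrow> real) \<Rightarrow> bool" where
  "imcond F \<longleftrightarrow> (\<forall>a b. a \<le> b \<longrightarrow> emeasure (interval_measure F) {a<..b} = ennreal (F b - F a))"

lemma IM_Ioc_cases:
  assumes "a \<le> b"
  shows "emeasure (interval_measure F) {a<..b} = (if imcond F then ennreal (F b - F a) else 0)"
proof (cases "imcond F")
  case True then show ?thesis using assms by (simp add: imcond_def)
next
  case False
  let ?I = "{(a, b). a \<le> (b::real)}" and ?G = "\<lambda>(a, b). {a<..b::real}"
    and ?m = "\<lambda>(a, b). ennreal (F b - F a)"
  have ne: "\<not> (\<exists>\<mu>'. (\<forall>i\<in>?I. \<mu>' (?G i) = ?m i) \<and> measure_space UNIV (sigma_sets UNIV (?G ` ?I)) \<mu>')"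
  proof
    assume "\<exists>\<mu>'. (\<forall>i\<in>?I. \<mu>' (?G i) = ?m i) \<and> measure_space UNIV (sigma_sets UNIV (?G ` ?I)) \<mu>'"
    then obtain \<mu>' where eq: "\<forall>i\<in>?I. \<mu>' (?G i) = ?m i"
      and ms: "measure_space UNIV (sigma_sets UNIV (?G ` ?I)) \<mu>'" by blast
    have sM: "sets (interval_measure F) = sigma_sets UNIV (?G ` ?I)"
      unfolding interval_measure_def by (rule sets_extend_measure) auto
    have "imcond F"
      unfolding imcond_def
    proof (intro allI impI)
      fix a b :: real assume "a \<le> b"
      show "emeasure (interval_measure F) {a<..b} = ennreal (F b - F a)"
        using emeasure_extend_measure_Pair[OF interval_measure_def, where \<mu>'=\<mu>' and i=a and j=b] eq ms \<open>a \<le> b\<close> sM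
        by (auto simp: measure_space_def)
    qed
    with False show False by simp
  qed
  have M: "interval_measure F = measure_of UNIV (?G ` ?I) (\<lambda>_. 0)"
    unfolding interval_measure_def extend_measure_def using ne by (simp only: if_not_P) simp
  have "emeasure (interval_measure F) {a<..b} = 0"
    using measure_space_0[of "?G ` ?I" UNIV]
    by (intro emeasure_measure_of[OF M]) (auto simp: M measure_space_def assms intro!: sigma_sets.Basic)
  with False show ?thesis by simp
qed

lemma vimage_affine_Ioc:
  fixes c d :: real assumes "c > 0"
  shows "(\<lambda>u. (u - d) / c) -` {a<..b} = {c * a + d<..c * b + d}"
  using assms by (auto simp: field_simps)

lemma imcond_affine:
  fixes c d :: real assumes c: "c > 0" and F: "imcond F"
  shows "imcond (\<lambda>s. F (c * s + d))"
proof -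
  let ?N = "distr (interval_measure F) borel (\<lambda>u. (u - d) / c)"
  have sN: "sets ?N = sets borel" by simp
  have eqN: "emeasure ?N {a<..b} = ennreal (F (c * b + d) - F (c * a + d))" if "a \<le> b" for a b
  proof -
    have "emeasure ?N {a<..b} = emeasure (interval_measure F) {c * a + d<..c * b + d}"
      by (subst emeasure_distr) (auto simp: vimage_affine_Ioc[OF c])
    also have "\<dots> = ennreal (F (c * b + d) - F (c * a + d))"
      using F c that by (simp add: imcond_def mult_left_mono)
    finally show ?thesis .
  qed
  have sM: "sets (interval_measure (\<lambda>s. F (c * s + d))) = sets ?N" by simp
  show ?thesis unfolding imcond_def
  proof (intro allI impI)
    fix a b :: real assume ab: "a \<le> b"
    show "emeasure (interval_measure (\<lambda>s. F (c * s + d))) {a<..b} = ennreal (F (c * b + d) - F (c * a + d))"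
      using emeasure_extend_measure_Pair[OF interval_measure_def, where \<mu>'="emeasure ?N" and i=a and j=b]
        eqN ab measure_space[of ?N] sM
      by (auto simp: measure_space_def)
  qed
qed

lemma imcond_affine_iff:
  fixes c d :: real assumes c: "c > 0"
  shows "imcond (\<lambda>s. F (c * s + d)) \<longleftrightarrow> imcond F"
proof
  assume "imcond (\<lambda>s. F (c * s + d))"
  from imcond_affine[OF _ this, of "1/c" "-d/c"] c
  have "imcond (\<lambda>s. F (c * (1/c * s + - d / c) + d))" by simp
  moreover have "(\<lambda>s. F (c * (1/c * s + - d / c) + d)) = F"
    using c by (auto simp: field_simps)
  ultimately show "imcond F" by simp
qed (rule imcond_affine[OF c])

lemma IM_affine:
  fixes c d :: real assumes c: "c > 0"
  shows "interval_measure (\<lambda>s. F (c * s + d)) = distr (interval_measure F) borel (\<lambda>u. (u - d) / c)"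
proof (rule measure_eqI_generator_eq[where E="range (\<lambda>(a, b). {a<..b::real})" and \<Omega>=UNIV
      and A="\<lambda>i. {- real i<..real i}"])
  show "Int_stable (range (\<lambda>(a, b). {a<..b::real}))"
  proof (rule Int_stableI)
    fix A B assume "A \<in> range (\<lambda>(a, b). {a<..b::real})" "B \<in> range (\<lambda>(a, b). {a<..b::real})"
    then obtain a b c d where "A = {a<..b}" "B = {c<..d}" by auto
    moreover have "{a<..b} \<inter> {c<..d} = {max a c<..min b d}" by auto
    ultimately show "A \<inter> B \<in> range (\<lambda>(a, b). {a<..b::real})" by auto
  qed
  show "range (\<lambda>(a, b). {a<..b::real}) \<subseteq> Pow UNIV" by auto
  show "sets (interval_measure (\<lambda>s. F (c * s + d))) = sigma_sets UNIV (range (\<lambda>(a, b). {a<..b::real}))"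
    by (simp add: borel_sigma_sets_Ioc)
  show "sets (distr (interval_measure F) borel (\<lambda>u. (u - d) / c)) = sigma_sets UNIV (range (\<lambda>(a, b). {a<..b::real}))"
    by (simp add: borel_sigma_sets_Ioc)
  show "range (\<lambda>i. {- real i<..real i}) \<subseteq> range (\<lambda>(a, b). {a<..b::real})" by auto
  show "(\<Union>i. {- real i<..real i}) = UNIV"
  proof safe
    fix x :: real
    obtain n :: nat where "\<bar>x\<bar> < n" using reals_Archimedean2 by blast
    then show "x \<in> (\<Union>i. {- real i<..real i})" by (auto intro!: exI[of _ n])
  qed auto
  show "emeasure (interval_measure (\<lambda>s. F (c * s + d))) {- real i<..real i} \<noteq> \<infinity>" for i
    by (subst IM_Ioc_cases) auto
  fix X assume "X \<in> range (\<lambda>(a, b). {a<..b::real})"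
  then obtain a b where X: "X = {a<..b}" by auto
  show "emeasure (interval_measure (\<lambda>s. F (c * s + d))) X = emeasure (distr (interval_measure F) borel (\<lambda>u. (u - d) / c)) X"
  proof (cases "a \<le> b")
    case True
    have "emeasure (distr (interval_measure F) borel (\<lambda>u. (u - d) / c)) X
        = emeasure (interval_measure F) {c * a + d<..c * b + d}"
      unfolding X by (subst emeasure_distr) (auto simp: vimage_affine_Ioc[OF c])
    also have "\<dots> = (if imcond F then ennreal (F (c * b + d) - F (c * a + d)) else 0)"
      using c True by (intro IM_Ioc_cases) (simp add: mult_left_mono)
    also have "\<dots> = emeasure (interval_measure (\<lambda>s. F (c * s + d))) X"
      unfolding X by (subst IM_Ioc_cases[OF True]) (simp add: imcond_affine_iff[OF c])
    finally show ?thesis by simp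
  next
    case False then show ?thesis by (simp add: X)
  qed
qed

lemma curve_length_affine:
  fixes c d :: real assumes c: "c > 0"
  shows "curve_length (\<lambda>s. g (c * s + d)) a b = curve_length g (c * a + d) (c * b + d)"
proof -
  let ?S1 = "{(n, t :: nat \<Rightarrow> real). t 0 = a \<and> t n = b \<and> (\<forall>i<n. t i \<le> t (Suc i))}"
  let ?S2 = "{(n, t :: nat \<Rightarrow> real). t 0 = c * a + d \<and> t n = c * b + d \<and> (\<forall>i<n. t i \<le> t (Suc i))}"
  have 1: "(SUP (n, t) \<in> ?S1. (\<Sum>i<n. ennreal (dist (g (c * t i + d)) (g (c * t (Suc i) + d)))))
      \<le> (SUP (n, t) \<in> ?S2. (\<Sum>i<n. ennreal (dist (g (t i)) (g (t (Suc i))))))"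
  proof (rule SUP_least)
    fix p assume "p \<in> ?S1"
    then obtain n t where p: "p = (n, t)" and h: "t 0 = a" "t n = b" "\<forall>i<n. t i \<le> t (Suc i)" by auto
    show "(case p of (n, t) \<Rightarrow> \<Sum>i<n. ennreal (dist (g (c * t i + d)) (g (c * t (Suc i) + d))))
      \<le> (SUP (n, t) \<in> ?S2. (\<Sum>i<n. ennreal (dist (g (t i)) (g (t (Suc i))))))"
      by (rule SUP_upper2[of "(n, \<lambda>i. c * t i + d)"]) (use h c p in \<open>auto intro: mult_left_mono\<close>)
  qed
  have 2: "(SUP (n, t) \<in> ?S2. (\<Sum>i<n. ennreal (dist (g (t i)) (g (t (Suc i))))))
      \<le> (SUP (n, t) \<in> ?S1. (\<Sum>i<n. ennreal (dist (g (c * t i + d)) (g (c * t (Suc i) + d)))))"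
  proof (rule SUP_least)
    fix p assume "p \<in> ?S2"
    then obtain n t where p: "p = (n, t)" and h: "t 0 = c * a + d" "t n = c * b + d" "\<forall>i<n. t i \<le> t (Suc i)" by auto
    have e: "c * ((t i - d) / c) + d = t i" for i using c by (simp add: field_simps)
    show "(case p of (n, t) \<Rightarrow> \<Sum>i<n. ennreal (dist (g (t i)) (g (t (Suc i)))))
      \<le> (SUP (n, t) \<in> ?S1. (\<Sum>i<n. ennreal (dist (g (c * t i + d)) (g (c * t (Suc i) + d)))))"
      by (rule SUP_upper2[of "(n, \<lambda>i. (t i - d) / c)"]) (use h c p in \<open>auto simp: e divide_right_mono\<close>)
  qed
  show ?thesis unfolding curve_length_def using 1 2 by (rule antisym)
qed

lemma line_integral_seg_affine:
  fixes c d :: real assumes c: "c > 0"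
    and meas: "(\<lambda>u. indicator {c * a + d..c * b + d} u * \<rho> (g u)) \<in> borel_measurable borel"
  shows "line_integral_seg \<rho> (\<lambda>s. g (c * s + d)) a b = line_integral_seg \<rho> g (c * a + d) (c * b + d)"
proof -
  define Fg where "Fg u = enn2real (curve_length g (c * a + d) (max (c * a + d) (min (c * b + d) u)))" for u
  have mm: "c * max a (min b s) + d = max (c * a + d) (min (c * b + d) (c * s + d))" for s
    using c by (auto simp: max_def min_def mult_left_mono)
  have F: "(\<lambda>s. enn2real (curve_length (\<lambda>s. g (c * s + d)) a (max a (min b s)))) = (\<lambda>s. Fg (c * s + d))"
    by (simp add: curve_length_affine[OF c] Fg_def mm)
  have ind: "indicator {a..b} t = (indicator {c * a + d..c * b + d} (c * t + d) :: ennreal)" for t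
    using c by (auto simp: indicator_def mult_le_cancel_left_pos)
  have "line_integral_seg \<rho> (\<lambda>s. g (c * s + d)) a b
     = (\<integral>\<^sup>+ t. indicator {c * a + d..c * b + d} (c * t + d) * \<rho> (g (c * t + d))
          \<partial>distr (interval_measure Fg) borel (\<lambda>u. (u - d) / c))"
    unfolding line_integral_seg_def F IM_affine[OF c] ind ..
  also have "\<dots> = (\<integral>\<^sup>+ u. indicator {c * a + d..c * b + d} (c * ((u - d) / c) + d) * \<rho> (g (c * ((u - d) / c) + d))
          \<partial>interval_measure Fg)"
    using meas by (subst nn_integral_distr) auto
  also have "\<dots> = line_integral_seg \<rho> g (c * a + d) (c * b + d)"
    unfolding line_integral_seg_def Fg_def using c by simp
  finally show ?thesis .
qed

lemma meas_ind_comp: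
  fixes h :: "real \<Rightarrow> 'b::metric_space" and \<rho> :: "'b \<Rightarrow> ennreal"
  assumes h: "continuous_on {p..q} h" and \<rho>: "\<rho> \<in> borel_measurable borel"
  shows "(\<lambda>u. indicator {p..q} u * \<rho> (h u)) \<in> borel_measurable borel"
proof -
  have "h \<in> borel_measurable (restrict_space borel {p..q})"
    using h by (rule borel_measurable_continuous_on_restrict)
  then have "(\<lambda>u. \<rho> (h u)) \<in> borel_measurable (restrict_space borel {p..q})"
    using \<rho> by (rule measurable_compose)
  then have "(\<lambda>u. \<rho> (h u) * indicator {p..q} u) \<in> borel_measurable borel"
    by (subst borel_measurable_restrict_space_iff_ennreal[symmetric]) auto
  then show ?thesis by (simp add: mult.commute)
qed

lemma subcurve_transfer:
  fixes g :: "real \<Rightarrow> 'b::metric_space"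
  assumes g: "loc_rectifiable {0<..<1} g" and ab: "0 < a" "a < b" "b < 1"
  shows "loc_rectifiable {0..1} (\<lambda>s. g ((b - a) * s + a))"
    and "\<rho> \<in> borel_measurable borel \<Longrightarrow>
         line_integral {0..1} \<rho> (\<lambda>s. g ((b - a) * s + a)) \<le> line_integral {0<..<1} \<rho> g"
proof -
  have c: "b - a > 0" using ab by simp
  have gc: "continuous_on {0<..<1} g" and gl: "\<And>p q. p \<le> q \<Longrightarrow> {p..q} \<subseteq> {0<..<1} \<Longrightarrow> curve_length g p q < \<infinity>"
    using g by (auto simp: loc_rectifiable_def)
  have sub: "{(b - a) * p + a..(b - a) * q + a} \<subseteq> {0<..<1}" if "{p..q} \<subseteq> {0..1}" "p \<le> q" for p q
  proof -
    have "0 \<le> p" "q \<le> 1" using that by auto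
    then have "0 \<le> (b - a) * p" using c by (simp add: zero_le_mult_iff)
    have h2: "(b - a) * q \<le> (b - a) * 1" using \<open>q \<le> 1\<close> c by (intro mult_left_mono) auto
    show ?thesis
    proof (rule subsetI)
      fix x assume "x \<in> {(b - a) * p + a..(b - a) * q + a}"
      then have "(b - a) * p + a \<le> x" "x \<le> (b - a) * q + a" by auto
      then show "x \<in> {0<..<1}" using ab \<open>0 \<le> (b - a) * p\<close> h2 unfolding greaterThanLessThan_iff mult_1_right by linarith
    qed
  qed
  have le: "(b - a) * p + a \<le> (b - a) * q + a" if "p \<le> q" for p q
    using c that by (simp add: mult_left_mono)
  have cont: "continuous_on {0..1} (\<lambda>s. g ((b - a) * s + a))"
  proof (rule continuous_on_compose2[OF gc])
    show "continuous_on {0..1} (\<lambda>s. (b - a) * s + a)" by (intro continuous_intros)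
    show "(\<lambda>s. (b - a) * s + a) ` {0..1} \<subseteq> {0<..<1}"
    proof (rule image_subsetI)
      fix s :: real assume s: "s \<in> {0..1}"
      have "(b - a) * s + a \<in> {(b - a) * 0 + a..(b - a) * 1 + a}"
        using le[of 0 s] le[of s 1] s unfolding atLeastAtMost_iff by blast
      moreover have "{(b - a) * 0 + a..(b - a) * 1 + a} \<subseteq> {0<..<1}" by (rule sub) auto
      ultimately show "(b - a) * s + a \<in> {0<..<1}" by blast
    qed
  qed
  show "loc_rectifiable {0..1} (\<lambda>s. g ((b - a) * s + a))"
    unfolding loc_rectifiable_def
  proof (intro conjI allI impI cont)
    fix p q :: real assume "p \<le> q \<and> {p..q} \<subseteq> {0..1}"
    then show "curve_length (\<lambda>s. g ((b - a) * s + a)) p q < \<infinity>"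
      using gl[OF le sub] by (simp add: curve_length_affine[OF c])
  qed
  assume \<rho>: "\<rho> \<in> borel_measurable borel"
  show "line_integral {0..1} \<rho> (\<lambda>s. g ((b - a) * s + a)) \<le> line_integral {0<..<1} \<rho> g"
    unfolding line_integral_def
  proof (rule SUP_least)
    fix pq assume "pq \<in> {(p, q). p \<le> q \<and> {p..q} \<subseteq> {0..(1::real)}}"
    then obtain p q where pq: "pq = (p, q)" "p \<le> q" "{p..q} \<subseteq> {0..1}" by auto
    have m: "(\<lambda>u. indicator {(b - a) * p + a..(b - a) * q + a} u * \<rho> (g u)) \<in> borel_measurable borel"
      by (rule meas_ind_comp[OF continuous_on_subset[OF gc sub[OF pq(3,2)]] \<rho>])
    have "line_integral_seg \<rho> (\<lambda>s. g ((b - a) * s + a)) p q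
        = line_integral_seg \<rho> g ((b - a) * p + a) ((b - a) * q + a)"
      by (rule line_integral_seg_affine[where c="b - a" and d=a and a=p and b=q and g=g, OF c m])
    also have "\<dots> \<le> (SUP (a, b)\<in>{(a, b). a \<le> b \<and> {a..b} \<subseteq> {0<..<1}}. line_integral_seg \<rho> g a b)"
      by (rule SUP_upper2[of "((b - a) * p + a, (b - a) * q + a)"]) (use le[OF pq(2)] sub[OF pq(3,2)] in auto)
    finally show "(case pq of (a', b') \<Rightarrow> line_integral_seg \<rho> (\<lambda>s. g ((b - a) * s + a)) a' b')
        \<le> (SUP (a, b)\<in>{(a, b). a \<le> b \<and> {a..b} \<subseteq> {0<..<1}}. line_integral_seg \<rho> g a b)"
      by (simp add: pq)
  qed
qed

lemma exists_crossing:
  fixes h :: "real \<Rightarrow> real"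
  assumes cont: "continuous_on {p..q} h" and pq: "p < q"
    and hp: "h p < r1" and hq: "h q > r2" and r: "r1 < r2"
  shows "\<exists>a b. p \<le> a \<and> a < b \<and> b \<le> q \<and> h a = r1 \<and> h b = r2 \<and>
           (\<forall>t\<in>{a<..<b}. r1 < h t \<and> h t < r2)"
proof -
  define K where "K = {p..q} \<inter> h -` {r2..}"
  have Kc: "closed K" unfolding K_def by (rule continuous_closed_preimage[OF cont]) auto
  have "q \<in> K" using hq pq unfolding K_def by auto
  then have Kne: "K \<noteq> {}" by blast
  have Kb: "bdd_below K" unfolding K_def by (rule bdd_belowI[of _ p]) auto
  define b where "b = Inf K"
  have bK: "b \<in> K" unfolding b_def by (rule closed_contains_Inf[OF Kne Kb Kc])
  have bmin: "b \<le> t" if "t \<in> K" for t unfolding b_def by (rule cInf_lower[OF that Kb])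
  have b1: "p \<le> b" "b \<le> q" "h b \<ge> r2" using bK by (auto simp: K_def)
  have "\<exists>x. p \<le> x \<and> x \<le> b \<and> h x = r2"
    by (rule IVT'[of h p r2 b]) (use hp r b1 in \<open>auto intro: continuous_on_subset[OF cont]\<close>)
  then obtain x where x: "p \<le> x" "x \<le> b" "h x = r2" by blast
  then have "x \<in> K" using b1 by (auto simp: K_def)
  then have "b \<le> x" by (rule bmin)
  with x have hb: "h b = r2" by simp
  have pb: "p < b" using b1 hp hb r by (cases "p = b") auto
  define L where "L = {p..b} \<inter> h -` {..r1}"
  have Lc: "closed L" unfolding L_def
    by (rule continuous_closed_preimage[OF continuous_on_subset[OF cont]]) (use b1 in auto)
  have "p \<in> L" using hp pb unfolding L_def by auto
  then have Lne: "L \<noteq> {}" by blast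
  have Lb: "bdd_above L" unfolding L_def by (rule bdd_aboveI[of _ b]) auto
  define a where "a = Sup L"
  have aL: "a \<in> L" unfolding a_def by (rule closed_contains_Sup[OF Lne Lb Lc])
  have amax: "t \<le> a" if "t \<in> L" for t unfolding a_def by (rule cSup_upper[OF that Lb])
  have a1: "p \<le> a" "a \<le> b" "h a \<le> r1" using aL by (auto simp: L_def)
  have ab: "a < b" using a1 hb r by (cases "a = b") auto
  have "\<exists>y. a \<le> y \<and> y \<le> b \<and> h y = r1"
    by (rule IVT'[of h a r1 b]) (use a1 hb r b1 in \<open>auto intro: continuous_on_subset[OF cont]\<close>)
  then obtain y where y: "a \<le> y" "y \<le> b" "h y = r1" by blast
  then have "y \<in> L" using a1 by (auto simp: L_def)
  then have "y \<le> a" by (rule amax)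
  with y have ha: "h a = r1" by simp
  have mid: "r1 < h t \<and> h t < r2" if t: "t \<in> {a<..<b}" for t
  proof
    show "r1 < h t"
    proof (rule ccontr)
      assume "\<not> r1 < h t"
      then have "t \<in> L" using t a1 by (auto simp: L_def)
      then have "t \<le> a" by (rule amax)
      with t show False by simp
    qed
    show "h t < r2"
    proof (rule ccontr)
      assume "\<not> h t < r2"
      then have "t \<in> K" using t a1 b1 by (auto simp: K_def)
      then have "b \<le> t" by (rule bmin)
      with t show False by simp
    qed
  qed
  show ?thesis using a1 ab b1 ha hb mid by blast
qed

lemma modulus_mono_adm:
  assumes "\<And>\<rho>. admissible J H \<rho> \<Longrightarrow> admissible I G \<rho>"
  shows "modulus M p I G \<le> modulus M p J H"
  unfolding modulus_def by (rule INF_superset_mono) (auto intro: assms)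

lemma adm_transfer:
  fixes f :: "'a::metric_space \<Rightarrow> 'b::metric_space" and x0 :: 'a
  assumes r: "0 < r1" "r1 < r2"
    and adm: "admissible {0..1}
       ((\<lambda>\<gamma>. f \<circ> \<gamma>) ` {\<gamma> \<in> curves_between (sphere_at x0 r1) (sphere_at x0 r2) (annulus x0 r1 r2).
                              \<gamma> ` {0..1} \<subseteq> D - {x0}}) \<rho>"
  shows "admissible {0<..<1} ((\<lambda>\<gamma>. f \<circ> \<gamma>) ` {\<gamma> :: real \<Rightarrow> 'a. continuous_on {0<..<1} \<gamma> \<and>
               \<gamma> ` {0<..<1} \<subseteq> D - {x0} \<and>
               (\<exists>t :: nat \<Rightarrow> real. (\<forall>k. t k \<in> {0<..<1}) \<and> t \<longlonglongrightarrow> 0 \<and>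
                   (\<lambda>k. \<gamma> (t k)) \<longlonglongrightarrow> x0) \<and> (\<exists>s\<in>{0<..<1}. r2 < dist (\<gamma> s) x0)}) \<rho>"
proof -
  have \<rho>: "\<rho> \<in> borel_measurable borel" using adm by (simp add: admissible_def)
  have A: "\<And>g. g \<in> (\<lambda>\<gamma>. f \<circ> \<gamma>) ` {\<gamma> \<in> curves_between (sphere_at x0 r1) (sphere_at x0 r2) (annulus x0 r1 r2).
                              \<gamma> ` {0..1} \<subseteq> D - {x0}} \<Longrightarrow> loc_rectifiable {0..1} g \<Longrightarrow> 1 \<le> line_integral {0..1} \<rho> g"
    using adm by (auto simp: admissible_def)
  show ?thesis unfolding admissible_def
  proof (intro conjI \<rho> ballI impI)
    fix g assume "g \<in> (\<lambda>\<gamma>. f \<circ> \<gamma>) ` {\<gamma> :: real \<Rightarrow> 'a. continuous_on {0<..<1} \<gamma> \<and>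
               \<gamma> ` {0<..<1} \<subseteq> D - {x0} \<and>
               (\<exists>t :: nat \<Rightarrow> real. (\<forall>k. t k \<in> {0<..<1}) \<and> t \<longlonglongrightarrow> 0 \<and>
                   (\<lambda>k. \<gamma> (t k)) \<longlonglongrightarrow> x0) \<and> (\<exists>s\<in>{0<..<1}. r2 < dist (\<gamma> s) x0)}"
    then obtain \<gamma> t s where g: "g = f \<circ> \<gamma>" and gc: "continuous_on {0<..<1} \<gamma>"
      and gim: "\<gamma> ` {0<..<1} \<subseteq> D - {x0}" and t: "\<forall>k. t k \<in> {0<..<1}" "t \<longlonglongrightarrow> 0"
      "(\<lambda>k. \<gamma> (t k)) \<longlonglongrightarrow> x0" and s: "s \<in> {0<..<1}" "r2 < dist (\<gamma> s) x0"
      by blast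
    assume lr: "loc_rectifiable {0<..<1} g"
    have ev1: "eventually (\<lambda>k. t k < s) sequentially"
      using order_tendstoD(2)[OF t(2), of s] s by auto
    have ev2: "eventually (\<lambda>k. dist (\<gamma> (t k)) x0 < r1) sequentially"
      using t(3) r unfolding tendsto_iff by auto
    obtain k where k: "t k < s" "dist (\<gamma> (t k)) x0 < r1"
      using eventually_happens'[OF _ eventually_conj[OF ev1 ev2]] by auto
    have tk0: "0 < t k" using t(1) by simp
    have sub: "{t k..s} \<subseteq> {0<..<1}"
    proof
      fix u assume "u \<in> {t k..s}"
      then have "t k \<le> u" "u \<le> s" by auto
      then show "u \<in> {0<..<1}" using tk0 s(1) by simp
    qed
    have hc: "continuous_on {t k..s} (\<lambda>u. dist (\<gamma> u) x0)"
      by (intro continuous_intros continuous_on_subset[OF gc sub])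
    obtain a b where ab: "t k \<le> a" "a < b" "b \<le> s" "dist (\<gamma> a) x0 = r1" "dist (\<gamma> b) x0 = r2"
      and mid: "\<forall>u\<in>{a<..<b}. r1 < dist (\<gamma> u) x0 \<and> dist (\<gamma> u) x0 < r2"
      using exists_crossing[OF hc k(1) k(2) s(2) r(2)] by blast
    have a0: "0 < a" using tk0 ab(1) by linarith
    have b1: "b < 1" using s ab(3) by simp
    have abs: "{a..b} \<subseteq> {0<..<1}" using a0 b1 by auto
    define \<sigma> where "\<sigma> = (\<lambda>u. \<gamma> ((b - a) * u + a))"
    have img: "(b - a) * u + a \<in> {a..b}" if "u \<in> {0..1}" for u
    proof -
      have "(b - a) * u \<le> (b - a) * 1" using that ab by (intro mult_left_mono) auto
      moreover have "0 \<le> (b - a) * u" using that ab by simp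
      ultimately show ?thesis by simp
    qed
    have imgo: "(b - a) * u + a \<in> {a<..<b}" if "u \<in> {0<..<1}" for u
    proof -
      have "(b - a) * u < (b - a) * 1" using that ab by (intro mult_strict_left_mono) auto
      moreover have "0 < (b - a) * u" using that ab by simp
      ultimately show ?thesis by simp
    qed
    have \<sigma>c: "continuous_on {0..1} \<sigma>"
      unfolding \<sigma>_def
      by (rule continuous_on_compose2[OF continuous_on_subset[OF gc abs]]) (auto intro!: continuous_intros img)
    have "\<sigma> \<in> {\<gamma> \<in> curves_between (sphere_at x0 r1) (sphere_at x0 r2) (annulus x0 r1 r2).
                              \<gamma> ` {0..1} \<subseteq> D - {x0}}"
    proof -
      have e0: "dist (\<sigma> 0) x0 = r1" "dist (\<sigma> 1) x0 = r2" using ab by (simp_all add: \<sigma>_def)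
      have ei: "r1 < dist (\<sigma> u) x0 \<and> dist (\<sigma> u) x0 < r2" if "u \<in> {0<..<1}" for u
        using mid imgo[OF that] by (auto simp: \<sigma>_def)
      have eim: "\<sigma> u \<in> D - {x0}" if "u \<in> {0..1}" for u
      proof -
        have "(b - a) * u + a \<in> {0<..<1}" using img[OF that] abs by (rule subsetD[rotated])
        then have "\<gamma> ((b - a) * u + a) \<in> \<gamma> ` {0<..<1}" by (rule imageI)
        then show ?thesis unfolding \<sigma>_def by (rule subsetD[OF gim])
      qed
      have ei': "\<forall>u\<in>{0<..<1}. \<sigma> u \<in> {x. r1 < dist x x0 \<and> dist x x0 < r2}" using ei by simp
      have c1: "\<sigma> \<in> curves_between (sphere_at x0 r1) (sphere_at x0 r2) (annulus x0 r1 r2)"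
        unfolding curves_between_def sphere_at_def annulus_def using \<sigma>c e0 ei' by simp
      have c2: "\<sigma> ` {0..1} \<subseteq> D - {x0}" by (intro image_subsetI eim)
      show ?thesis using c1 c2 by simp
    qed
    moreover have fs: "(\<lambda>u. g ((b - a) * u + a)) = f \<circ> \<sigma>" by (simp add: \<sigma>_def g o_def)
    ultimately have mem: "(\<lambda>u. g ((b - a) * u + a)) \<in> (\<lambda>\<gamma>. f \<circ> \<gamma>) ` {\<gamma> \<in> curves_between (sphere_at x0 r1) (sphere_at x0 r2) (annulus x0 r1 r2).
                              \<gamma> ` {0..1} \<subseteq> D - {x0}}" by (intro image_eqI[where x=\<sigma>])
    have "1 \<le> line_integral {0..1} \<rho> (\<lambda>u. g ((b - a) * u + a))"
      by (rule A[OF mem subcurve_transfer(1)[OF lr a0 ab(2) b1]])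
    also have "\<dots> \<le> line_integral {0<..<1} \<rho> g"
      by (rule subcurve_transfer(2)[OF lr a0 ab(2) b1 \<rho>])
    finally show "1 \<le> line_integral {0<..<1} \<rho> g" .
  qed
qed

lemma epowr_ennreal: "0 \<le> r \<Longrightarrow> epowr (ennreal r) p = ennreal (r powr p)"
  by (simp add: epowr_def)

lemma epowr_top: "p > 0 \<Longrightarrow> epowr top p = top"
  by (simp add: epowr_def)

lemma epowr_mult_const:
  assumes c: "c > 0" and p: "p > 0"
  shows "epowr (x * ennreal c) p = epowr x p * ennreal (c powr p)"
proof (cases x)
  case (real r)
  then have "x * ennreal c = ennreal (r * c)" using c by (simp add: ennreal_mult)
  then have "epowr (x * ennreal c) p = ennreal ((r * c) powr p)"
    using real c by (simp add: epowr_ennreal)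
  also have "\<dots> = ennreal (r powr p) * ennreal (c powr p)"
    using real c by (simp add: powr_mult ennreal_mult)
  also have "\<dots> = epowr x p * ennreal (c powr p)" using real by (simp add: epowr_ennreal)
  finally show ?thesis .
next
  case top
  have "top * ennreal c = top" using c by (simp add: ennreal_top_mult)
  moreover have "top * ennreal (c powr p) = top" using c by (simp add: ennreal_top_mult)
  ultimately show ?thesis using top p by (simp add: epowr_top)
qed

lemma nn_integral_multc_le:
  fixes g :: "'a \<Rightarrow> ennreal"
  assumes k: "k > 0"
  shows "(\<integral>\<^sup>+ x. g x * ennreal k \<partial>M) \<le> (\<integral>\<^sup>+ x. g x \<partial>M) * ennreal k"
proof -
  have "(\<integral>\<^sup>+ x. g x * ennreal k \<partial>M) = (SUP s \<in> {s. simple_function M s \<and> s \<le> (\<lambda>x. g x * ennreal k)}. integral\<^sup>S M s)"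
    by (simp add: nn_integral_def)
  also have "\<dots> \<le> (\<integral>\<^sup>+ x. g x \<partial>M) * ennreal k"
  proof (rule SUP_least)
    fix s assume s: "s \<in> {s. simple_function M s \<and> s \<le> (\<lambda>x. g x * ennreal k)}"
    let ?t = "\<lambda>x. s x * ennreal (1 / k)"
    have ts: "simple_function M ?t" using s by (auto intro: simple_function_mult simple_function_const)
    have eq: "s x = ?t x * ennreal k" for x
    proof -
      have "ennreal (1 / k) * ennreal k = ennreal ((1 / k) * k)"
        using k by (subst ennreal_mult[symmetric]) auto
      then have "?t x * ennreal k = s x * ennreal ((1 / k) * k)"
        by (simp add: mult.assoc)
      then show ?thesis using k by simp
    qed
    have tle: "?t x \<le> g x" for x
    proof -
      have "s x \<le> g x * ennreal k" using s by (auto simp: le_fun_def)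
      then have "?t x \<le> g x * ennreal k * ennreal (1 / k)" by (rule mult_right_mono) simp
      also have "\<dots> = g x" using k by (simp add: mult.assoc ennreal_mult[symmetric])
      finally show ?thesis .
    qed
    have "integral\<^sup>S M s = (\<integral>\<^sup>+ x. s x \<partial>M)"
      using s by (simp add: nn_integral_eq_simple_integral)
    also have "\<dots> = (\<integral>\<^sup>+ x. ?t x * ennreal k \<partial>M)" by (simp only: eq[symmetric])
    also have "\<dots> = (\<integral>\<^sup>+ x. ?t x \<partial>M) * ennreal k"
      by (rule nn_integral_multc) (rule borel_measurable_simple_function[OF ts])
    also have "\<dots> \<le> (\<integral>\<^sup>+ x. g x \<partial>M) * ennreal k"
      by (intro mult_right_mono nn_integral_mono tle) simp
    finally show "integral\<^sup>S M s \<le> (\<integral>\<^sup>+ x. g x \<partial>M) * ennreal k" .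
  qed
  finally show ?thesis .
qed

lemma ring_small:
  fixes \<mu> :: "'a::metric_space measure" and \<mu>' :: "'b::metric_space measure" and f :: "'a \<Rightarrow> 'b"
    and \<psi> :: "real \<Rightarrow> ennreal" and Q :: "'a \<Rightarrow> ennreal"
  assumes ring: "ring_Q_mapping \<mu> \<alpha> \<mu>' \<alpha>' D x0 Q f" and alpha: "\<alpha> > 0" and eps0: "\<epsilon>0 > 0"
    and psi: "\<psi> \<in> borel_measurable (restrict_space lebesgue {0<..<\<epsilon>0})"
    and I_pos: "\<forall>\<epsilon>2\<in>{0<..\<epsilon>0}. \<exists>\<epsilon>1\<in>{0<..\<epsilon>2}. \<forall>\<epsilon>\<in>{0<..<\<epsilon>1}.
                  0 < (\<integral>\<^sup>+ t \<in> {\<epsilon><..<\<epsilon>2}. \<psi> t \<partial>lebesgue) \<and>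
                  (\<integral>\<^sup>+ t \<in> {\<epsilon><..<\<epsilon>2}. \<psi> t \<partial>lebesgue) < \<infinity>"
    and little_o: "\<forall>c>0. eventually (\<lambda>\<epsilon>.
                  (\<integral>\<^sup>+ x \<in> annulus x0 \<epsilon> \<epsilon>0 \<inter> D. Q x * epowr (\<psi> (dist x x0)) \<alpha> \<partial>\<mu>)
                  \<le> ennreal c * epowr (\<integral>\<^sup>+ t \<in> {\<epsilon><..<\<epsilon>0}. \<psi> t \<partial>lebesgue) \<alpha>) (at_right 0)"
    and r2: "0 < r2" "r2 \<le> \<epsilon>0" and e: "e > 0"
  shows "\<exists>r1. 0 < r1 \<and> r1 < r2 \<and> modulus \<mu>' \<alpha>' {0..1} ((\<lambda>\<gamma>. f \<circ> \<gamma>) `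
     {\<gamma> \<in> curves_between (sphere_at x0 r1) (sphere_at x0 r2) (annulus x0 r1 r2). \<gamma> ` {0..1} \<subseteq> D - {x0}})
     \<le> ennreal e"
proof -
  define Iv where "Iv a b = (\<integral>\<^sup>+ t. \<psi> t * indicator {a<..<b} t \<partial>lebesgue)" for a b
  have psim: "(\<lambda>t. \<psi> t * indicator {0<..<\<epsilon>0} t) \<in> borel_measurable lebesgue"
  proof -
    have "{0<..<\<epsilon>0} \<in> sets lebesgue" by (rule sets_completionI_sets) simp
    then have "{0<..<\<epsilon>0} \<inter> space lebesgue \<in> sets lebesgue" by (simp only: space_completion space_lborel space_borel Int_UNIV_right)
    from borel_measurable_restrict_space_iff_ennreal[OF this, of \<psi>] psi show ?thesis by blast
  qed
  have indm: "(\<lambda>t. \<psi> t * indicator A t) \<in> borel_measurable lebesgue"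
    if "A \<subseteq> {0<..<\<epsilon>0}" "A \<in> sets borel" for A
  proof -
    have Aleb[measurable]: "A \<in> sets lebesgue" by (rule sets_completionI_sets) (simp add: that)
    note psim[measurable]
    have "(\<lambda>t. (\<psi> t * indicator {0<..<\<epsilon>0} t) * indicator A t) \<in> borel_measurable lebesgue"
      by measurable
    moreover have "(\<psi> t * indicator {0<..<\<epsilon>0} t) * indicator A t = \<psi> t * indicator A t" for t
      using that(1) by (auto simp: indicator_def)
    ultimately show ?thesis by simp
  qed
  have Ivmono: "Iv a b \<le> Iv a' b'" if "a' \<le> a" "b \<le> b'" for a b a' b'
    unfolding Iv_def
    by (intro nn_integral_mono mult_left_mono) (use that in \<open>auto simp: indicator_def\<close>)
  have I_pos': "\<forall>\<epsilon>2\<in>{0<..\<epsilon>0}. \<exists>\<epsilon>1\<in>{0<..\<epsilon>2}. \<forall>\<epsilon>\<in>{0<..<\<epsilon>1}. 0 < Iv \<epsilon> \<epsilon>2 \<and> Iv \<epsilon> \<epsilon>2 < \<infinity>"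
    using I_pos by (simp add: Iv_def)
  obtain e1a where e1a: "0 < e1a" "e1a \<le> \<epsilon>0" "\<forall>\<epsilon>\<in>{0<..<e1a}. 0 < Iv \<epsilon> \<epsilon>0 \<and> Iv \<epsilon> \<epsilon>0 < \<infinity>"
    using I_pos'[rule_format, of \<epsilon>0] eps0 by auto
  obtain e1b where e1b: "0 < e1b" "e1b \<le> r2" "\<forall>\<epsilon>\<in>{0<..<e1b}. 0 < Iv \<epsilon> r2 \<and> Iv \<epsilon> r2 < \<infinity>"
    using I_pos'[rule_format, of r2] r2 by auto
  define s0 where "s0 = e1b / 2"
  have s0: "0 < s0" "s0 < e1b" using e1b by (auto simp: s0_def)
  have kap0: "0 < Iv s0 r2" "Iv s0 r2 < \<infinity>" using e1b(3) s0 by auto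
  define kap where "kap = enn2real (Iv s0 r2)"
  have kap: "kap > 0" "Iv s0 r2 = ennreal kap" using kap0
    by (auto simp: kap_def enn2real_positive_iff less_top[symmetric] ennreal_enn2real_if)
  define u where "u = min e1a r2 / 2"
  have u: "0 < u" "u < e1a" "u < r2" using e1a r2 by (auto simp: u_def)
  have Iu: "Iv u \<epsilon>0 < \<infinity>" using e1a(3) u by auto
  define J where "J = (\<integral>\<^sup>+ t. \<psi> t * indicator {r2..<\<epsilon>0} t \<partial>lebesgue)"
  have "J \<le> Iv u \<epsilon>0" unfolding J_def Iv_def
    by (intro nn_integral_mono mult_left_mono) (use u in \<open>auto simp: indicator_def\<close>)
  then have Jfin: "J < \<infinity>" using Iu by auto
  define j where "j = enn2real J"
  have j: "0 \<le> j" "J = ennreal j" using Jfin by (auto simp: j_def less_top[symmetric] ennreal_enn2real_if)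
  define K0 where "K0 = (1 + j / kap) powr \<alpha>"
  have "0 \<le> j / kap" using j kap by simp
  then have "1 + j / kap > 0" by linarith
  then have K0: "K0 > 0" by (simp add: K0_def)
  define c where "c = e / K0"
  have c: "c > 0" using e K0 by (simp add: c_def)
  obtain b where b: "b > 0" "\<forall>y>0. y < b \<longrightarrow>
      (\<integral>\<^sup>+ x \<in> annulus x0 y \<epsilon>0 \<inter> D. Q x * epowr (\<psi> (dist x x0)) \<alpha> \<partial>\<mu>)
                  \<le> ennreal c * epowr (Iv y \<epsilon>0) \<alpha>"
    using little_o[rule_format, OF c] unfolding eventually_at_right_field Iv_def by blast
  define r1 where "r1 = min b s0 / 2"
  have r1: "0 < r1" "r1 < b" "r1 < s0" using b s0 by (auto simp: r1_def)
  have r1r2: "r1 < r2" using r1 s0 e1b by simp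
  have P: "(\<integral>\<^sup>+ x \<in> annulus x0 r1 \<epsilon>0 \<inter> D. Q x * epowr (\<psi> (dist x x0)) \<alpha> \<partial>\<mu>)
                  \<le> ennreal c * epowr (Iv r1 \<epsilon>0) \<alpha>" using b(2) r1 by auto
  have I0: "0 < Iv r1 r2" "Iv r1 r2 < \<infinity>" using e1b(3) r1 s0 by auto
  define i where "i = enn2real (Iv r1 r2)"
  have i: "i > 0" "Iv r1 r2 = ennreal i" using I0
    by (auto simp: i_def enn2real_positive_iff less_top[symmetric] ennreal_enn2real_if)
  have "ennreal kap \<le> ennreal i" using Ivmono[of r1 s0 r2 r2] r1 kap i by simp
  then have ik: "kap \<le> i" using i by simp
  have split: "Iv r1 \<epsilon>0 \<le> Iv r1 r2 + J"
  proof -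
    have "Iv r1 \<epsilon>0 \<le> (\<integral>\<^sup>+ t. \<psi> t * indicator {r1<..<r2} t + \<psi> t * indicator {r2..<\<epsilon>0} t \<partial>lebesgue)"
      unfolding Iv_def by (intro nn_integral_mono) (auto simp: indicator_def)
    also have "\<dots> = Iv r1 r2 + J"
      unfolding Iv_def J_def
      by (rule nn_integral_add) (intro indm; use r1 r2 r1r2 in auto)+
    finally show ?thesis .
  qed
  then have "Iv r1 \<epsilon>0 \<le> ennreal (i + j)" using i j by (simp add: ennreal_plus)
  then have vfin: "Iv r1 \<epsilon>0 < \<infinity>" by (rule le_less_trans) simp
  define v where "v = enn2real (Iv r1 \<epsilon>0)"
  have v: "0 \<le> v" "Iv r1 \<epsilon>0 = ennreal v" using vfin by (auto simp: v_def less_top[symmetric] ennreal_enn2real_if)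
  have vle: "v \<le> i + j"
  proof -
    have "ennreal v \<le> ennreal (i + j)" using \<open>Iv r1 \<epsilon>0 \<le> ennreal (i + j)\<close> v by simp
    then show ?thesis using i j by (subst (asm) ennreal_le_iff) auto
  qed
  define \<eta> where "\<eta> t = \<psi> t * indicator {r1<..<r2} t * ennreal (1 / i)" for t
  have \<eta>m: "\<eta> \<in> borel_measurable lebesgue"
  proof -
    have "(\<lambda>t. \<psi> t * indicator {r1<..<r2} t) \<in> borel_measurable lebesgue"
      by (rule indm) (use r1 r2 r1r2 in auto)
    then show ?thesis unfolding \<eta>_def by measurable
  qed
  have \<eta>int: "(\<integral>\<^sup>+ r \<in> {r1<..<r2}. \<eta> r \<partial>lebesgue) \<ge> 1"
  proof -
    have "(\<integral>\<^sup>+ r \<in> {r1<..<r2}. \<eta> r \<partial>lebesgue) = (\<integral>\<^sup>+ r. \<psi> r * indicator {r1<..<r2} r * ennreal (1 / i) \<partial>lebesgue)"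
      unfolding \<eta>_def by (intro nn_integral_cong) (auto simp: indicator_def)
    also have "\<dots> = Iv r1 r2 * ennreal (1 / i)"
      unfolding Iv_def by (rule nn_integral_multc) (rule indm; use r1 r2 r1r2 in auto)
    also have "\<dots> = ennreal (i * (1 / i))" using i by (simp only: i(2)) (subst ennreal_mult[symmetric]; simp)
    also have "\<dots> = 1" using i by simp
    finally show ?thesis by simp
  qed
  define S12 where "S12 = annulus x0 r1 r2 \<inter> (D - {x0})"
  define S0 where "S0 = annulus x0 r1 \<epsilon>0 \<inter> D"
  define Kf where "Kf = (1 / i) powr \<alpha>"
  have Kf: "Kf > 0" using i by (simp add: Kf_def)
  have modle: "modulus \<mu>' \<alpha>' {0..1} ((\<lambda>\<gamma>. f \<circ> \<gamma>) `
     {\<gamma> \<in> curves_between (sphere_at x0 r1) (sphere_at x0 r2) (annulus x0 r1 r2). \<gamma> ` {0..1} \<subseteq> D - {x0}})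
     \<le> (\<integral>\<^sup>+ x. Q x * epowr (\<eta> (dist x x0)) \<alpha> * indicator S12 x \<partial>\<mu>)"
    unfolding S12_def
    by (rule ring[unfolded ring_Q_mapping_def, rule_format, of r1 r2 \<eta>]) (use r1(1) r1r2 \<eta>m \<eta>int in simp)
  have pw: "Q x * epowr (\<eta> (dist x x0)) \<alpha> * indicator S12 x
      \<le> (Q x * epowr (\<psi> (dist x x0)) \<alpha> * indicator S0 x) * ennreal Kf" for x
  proof (cases "x \<in> S12")
    case True
    then have d: "r1 < dist x x0" "dist x x0 < r2" and xD: "x \<in> D" by (auto simp: S12_def annulus_def)
    then have xS0: "x \<in> S0" using r2 by (auto simp: S0_def annulus_def)
    have "\<eta> (dist x x0) = \<psi> (dist x x0) * ennreal (1 / i)" using d by (simp add: \<eta>_def)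
    then have "epowr (\<eta> (dist x x0)) \<alpha> = epowr (\<psi> (dist x x0)) \<alpha> * ennreal Kf"
      using i alpha by (simp add: epowr_mult_const Kf_def)
    then show ?thesis using True xS0 by (simp add: mult.assoc)
  qed simp
  have "(\<integral>\<^sup>+ x. Q x * epowr (\<eta> (dist x x0)) \<alpha> * indicator S12 x \<partial>\<mu>)
      \<le> (\<integral>\<^sup>+ x. (Q x * epowr (\<psi> (dist x x0)) \<alpha> * indicator S0 x) * ennreal Kf \<partial>\<mu>)"
    by (intro nn_integral_mono pw)
  also have "\<dots> \<le> (\<integral>\<^sup>+ x. Q x * epowr (\<psi> (dist x x0)) \<alpha> * indicator S0 x \<partial>\<mu>) * ennreal Kf"
    by (rule nn_integral_multc_le[OF Kf])
  also have "\<dots> \<le> (ennreal c * epowr (Iv r1 \<epsilon>0) \<alpha>) * ennreal Kf"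
    using P unfolding S0_def by (rule mult_right_mono) simp
  also have "\<dots> = ennreal (c * v powr \<alpha> * Kf)"
    using v c Kf by (simp add: epowr_ennreal ennreal_mult)
  also have "\<dots> \<le> ennreal e"
  proof (rule ennreal_leI)
    have "v powr \<alpha> * Kf = (v * (1 / i)) powr \<alpha>" unfolding Kf_def using v i by (subst powr_mult) auto
    also have "\<dots> \<le> (1 + j / kap) powr \<alpha>"
    proof (rule powr_mono2)
      show "0 \<le> \<alpha>" using alpha by simp
      show "0 \<le> v * (1 / i)" using v i by simp
      have "v * (1 / i) \<le> (i + j) / i" using vle i by (simp add: divide_right_mono)
      also have "\<dots> = 1 + j / i" using i by (simp add: field_simps)
      also have "\<dots> \<le> 1 + j / kap" using j kap ik by (simp add: frac_le)
      finally show "v * (1 / i) \<le> 1 + j / kap" .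
    qed
    finally have "v powr \<alpha> * Kf \<le> K0" by (simp add: K0_def)
    then have "c * (v powr \<alpha> * Kf) \<le> c * K0" using c by (intro mult_left_mono) auto
    also have "c * K0 = e" using K0 by (simp add: c_def)
    finally show "c * v powr \<alpha> * Kf \<le> e" by (simp add: mult.assoc)
  qed
  finally show ?thesis using modle r1(1) r1r2 by (meson order_trans)
qed

lemma epowr_measurable[measurable]:
  assumes f: "f \<in> borel_measurable M"
  shows "(\<lambda>x. epowr (f x) p) \<in> borel_measurable M"
proof -
  have c: "(\<lambda>x. enn2real (f x) powr p) \<in> borel_measurable M"
    by (intro powr_real_measurable borel_measurable_enn2real f measurable_const) simp
  have e: "(\<lambda>x. ennreal (enn2real (f x) powr p)) \<in> borel_measurable M"
    by (rule measurable_compose[OF c measurable_ennreal])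
  have "f -` {top} \<inter> space M \<in> sets M" by (rule measurable_sets[OF f]) simp
  moreover have "{x \<in> space M. f x = top} = f -` {top} \<inter> space M" by auto
  ultimately have s: "{x \<in> space M. f x = top} \<in> sets M" by simp
  show ?thesis unfolding epowr_def
    by (rule measurable_If[OF measurable_const e s]) simp
qed

lemma line_integral_mono_rho:
  assumes "\<And>y. \<rho> y \<le> \<rho>' y"
  shows "line_integral I \<rho> g \<le> line_integral I \<rho>' g"
  unfolding line_integral_def line_integral_seg_def
  by (rule SUP_subset_mono) (auto intro!: nn_integral_mono mult_left_mono assms)

lemma epowr_SUP_le:
  fixes a :: "nat \<Rightarrow> ennreal" assumes p: "p > 0"
  shows "epowr (SUP m. a m) p \<le> (SUP m. epowr (a m) p)"
proof (rule dense_le)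
  fix w assume w: "w < epowr (SUP m. a m) p"
  then have "w \<noteq> top" by auto
  then obtain w' where w': "w = ennreal w'" "0 \<le> w'" by (cases w rule: ennreal_cases) auto
  show "w \<le> (SUP m. epowr (a m) p)"
  proof (cases "w' = 0")
    case True then show ?thesis using w' by simp
  next
    case False
    with w' have w'p: "w' > 0" by simp
    define t where "t = w' powr (1 / p)"
    have t: "t > 0" "t powr p = w'" using w'p p by (auto simp: t_def powr_powr)
    have "ennreal t < (SUP m. a m)"
    proof (cases "(SUP m. a m)" rule: ennreal_cases)
      case (real r)
      then have "ennreal w' < ennreal (r powr p)" using w w' by (simp add: epowr_ennreal)
      then have "w' < r powr p" using ennreal_less_iff[OF w'(2)] by blast
      then have "t < r"
      proof -
        assume "w' < r powr p"
        show "t < r"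
        proof (rule ccontr)
          assume "\<not> t < r"
          then have "r powr p \<le> t powr p" using real p by (intro powr_mono2) auto
          with \<open>w' < r powr p\<close> t show False by simp
        qed
      qed
      then show ?thesis using real t ennreal_less_iff[of t r] by simp
    next
      case top
      show ?thesis unfolding top by simp
    qed
    then obtain m where m: "ennreal t < a m" by (auto simp: less_SUP_iff)
    have "ennreal w' \<le> epowr (a m) p"
    proof (cases "a m" rule: ennreal_cases)
      case (real b)
      then have "t < b" using m t ennreal_less_iff[of t b] by simp
      then have "t powr p \<le> b powr p" using t p by (intro powr_mono2) auto
      then show ?thesis using real t by (simp add: epowr_ennreal)
    next
      case top then show ?thesis using p by (simp add: epowr_top)
    qed
    also have "\<dots> \<le> (SUP m. epowr (a m) p)" by (rule SUP_upper) simp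
    finally show ?thesis using w' by simp
  qed
qed

lemma SUP_le_suminf_ennreal:
  fixes f :: "nat \<Rightarrow> ennreal"
  shows "(SUP m. f m) \<le> (\<Sum>m. f m)"
proof (rule SUP_least)
  fix m
  have "sum f {m} \<le> suminf f" by (rule sum_le_suminf) (auto intro: summableI)
  then show "f m \<le> suminf f" by simp
qed

lemma modulus_Union_zero:
  fixes G :: "nat \<Rightarrow> (real \<Rightarrow> 'b::metric_space) set"
  assumes p: "p > 0" and G: "\<And>m. modulus M p I (G m) = 0" and Ms: "sets M = sets borel"
  shows "modulus M p I (\<Union>m. G m) = 0"
proof -
  have *: "modulus M p I (\<Union>m. G m) \<le> 0 + ennreal \<delta>" if \<delta>: "\<delta> > 0" for \<delta>
  proof -
    define d where "d m = \<delta> * (1 / 2) ^ Suc m" for m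
    have d: "d m > 0" for m unfolding d_def using \<delta> by (intro mult_pos_pos zero_less_power) auto
    have ex: "\<exists>\<rho>. admissible I (G m) \<rho> \<and> (\<integral>\<^sup>+ y. epowr (\<rho> y) p \<partial>M) < ennreal (d m)" for m
    proof -
      have "0 < ennreal (d m)" using d[of m] by (simp only: ennreal_less_zero_iff)
      then have "modulus M p I (G m) < ennreal (d m)" by (simp only: G)
      then obtain \<rho> where "\<rho> \<in> {\<rho>. admissible I (G m) \<rho>}" "(\<integral>\<^sup>+ y. epowr (\<rho> y) p \<partial>M) < ennreal (d m)"
        unfolding modulus_def INF_less_iff by blast
      then show ?thesis by blast
    qed
    then have "\<forall>m. \<exists>\<rho>. admissible I (G m) \<rho> \<and> (\<integral>\<^sup>+ y. epowr (\<rho> y) p \<partial>M) < ennreal (d m)" by blast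
    from choice[OF this] obtain \<rho> where \<rho>': "\<forall>m. admissible I (G m) (\<rho> m) \<and> (\<integral>\<^sup>+ y. epowr (\<rho> m y) p \<partial>M) < ennreal (d m)"
      by blast
    have \<rho>: "\<And>m. admissible I (G m) (\<rho> m)" "\<And>m. (\<integral>\<^sup>+ y. epowr (\<rho> m y) p \<partial>M) < ennreal (d m)"
      using \<rho>' by auto
    define \<rho>s where "\<rho>s y = (SUP m. \<rho> m y)" for y
    have \<rho>m: "\<rho> m \<in> borel_measurable borel" for m using \<rho>(1) by (simp add: admissible_def)
    have adm: "admissible I (\<Union>m. G m) \<rho>s"
      unfolding admissible_def
    proof (intro conjI ballI impI)
      show "\<rho>s \<in> borel_measurable borel" unfolding \<rho>s_def by (rule borel_measurable_SUP) (auto intro: \<rho>m)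
      fix g assume "g \<in> (\<Union>m. G m)" and lr: "loc_rectifiable I g"
      then obtain m where g: "g \<in> G m" by blast
      have "1 \<le> line_integral I (\<rho> m) g" using \<rho>(1)[of m] g lr by (simp add: admissible_def)
      also have "\<dots> \<le> line_integral I \<rho>s g"
        by (rule line_integral_mono_rho) (auto simp: \<rho>s_def intro: SUP_upper)
      finally show "1 \<le> line_integral I \<rho>s g" .
    qed
    have sums: "(\<lambda>m. d m) sums \<delta>"
      using sums_mult[OF power_half_series, of \<delta>] by (simp add: d_def)
    have "modulus M p I (\<Union>m. G m) \<le> (\<integral>\<^sup>+ y. epowr (\<rho>s y) p \<partial>M)"
      unfolding modulus_def by (rule INF_lower) (use adm in simp)
    also have "\<dots> \<le> (\<integral>\<^sup>+ y. (\<Sum>m. epowr (\<rho> m y) p) \<partial>M)"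
    proof (rule nn_integral_mono)
      fix y
      have "epowr (\<rho>s y) p \<le> (SUP m. epowr (\<rho> m y) p)" unfolding \<rho>s_def by (rule epowr_SUP_le[OF p])
      also have "\<dots> \<le> (\<Sum>m. epowr (\<rho> m y) p)" by (rule SUP_le_suminf_ennreal)
      finally show "epowr (\<rho>s y) p \<le> (\<Sum>m. epowr (\<rho> m y) p)" .
    qed
    also have "\<dots> = (\<Sum>m. \<integral>\<^sup>+ y. epowr (\<rho> m y) p \<partial>M)"
    proof (rule nn_integral_suminf)
      fix m
      have "\<rho> m \<in> borel_measurable M" using \<rho>m[of m] by (simp add: measurable_cong_sets[OF Ms refl])
      then show "(\<lambda>y. epowr (\<rho> m y) p) \<in> borel_measurable M" by measurable
    qed
    also have "\<dots> \<le> (\<Sum>m. ennreal (d m))"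
      by (intro suminf_le summableI less_imp_le \<rho>(2))
    also have "\<dots> = ennreal \<delta>"
      using sums d \<delta> by (subst sums_unique[symmetric]) (auto simp: less_imp_le)
    finally show ?thesis by simp
  qed
  have "modulus M p I (\<Union>m. G m) \<le> 0" by (rule ennreal_le_epsilon) (rule *; simp)
  then show ?thesis by simp
qed

lemma admissible_subset: "H \<subseteq> G \<Longrightarrow> admissible I G \<rho> \<Longrightarrow> admissible I H \<rho>"
  by (auto simp: admissible_def)

theorem lemma5:
  fixes \<mu> :: "'a::metric_space measure" and \<mu>' :: "'b::metric_space measure"
    and D :: "'a set" and x0 :: 'a and \<alpha> \<alpha>' :: real
    and Q :: "'a \<Rightarrow> ennreal" and f :: "'a \<Rightarrow> 'b"
    and \<psi> :: "real \<Rightarrow> ennreal" and \<epsilon>0 :: real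
  assumes mu: "loc_finite_borel \<mu>"
    and dimX: "hausdorff_dimension (UNIV :: 'a set) = ereal \<alpha>" and alpha: "\<alpha> \<ge> 2"
    and D: "open D" "connected D" "x0 \<in> D"
    and mu': "loc_finite_borel \<mu>'"
    and ahlfors: "ahlfors_regular \<mu>' \<alpha>'" and alpha': "\<alpha>' \<ge> 2"
    and poincare: "poincare_1p \<mu>' \<alpha>'"
    and Q: "Q \<in> borel_measurable (restrict_space \<mu> D)"
    and ring: "ring_Q_mapping \<mu> \<alpha> \<mu>' \<alpha>' D x0 Q f"
    and eps0: "\<epsilon>0 > 0"
    and psi: "\<psi> \<in> borel_measurable (restrict_space lebesgue {0<..<\<epsilon>0})"
    and I_pos: "\<forall>\<epsilon>2\<in>{0<..\<epsilon>0}. \<exists>\<epsilon>1\<in>{0<..\<epsilon>2}. \<forall>\<epsilon>\<in>{0<..<\<epsilon>1}.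
                  0 < (\<integral>\<^sup>+ t \<in> {\<epsilon><..<\<epsilon>2}. \<psi> t \<partial>lebesgue) \<and>
                  (\<integral>\<^sup>+ t \<in> {\<epsilon><..<\<epsilon>2}. \<psi> t \<partial>lebesgue) < \<infinity>"
    and little_o: "\<forall>c>0. eventually (\<lambda>\<epsilon>.
                  (\<integral>\<^sup>+ x \<in> annulus x0 \<epsilon> \<epsilon>0 \<inter> D. Q x * epowr (\<psi> (dist x x0)) \<alpha> \<partial>\<mu>)
                  \<le> ennreal c * epowr (\<integral>\<^sup>+ t \<in> {\<epsilon><..<\<epsilon>0}. \<psi> t \<partial>lebesgue) \<alpha>) (at_right 0)"
  shows "modulus \<mu>' \<alpha>' {0<..<1}
           ((\<lambda>\<gamma>. f \<circ> \<gamma>) ` {\<gamma> :: real \<Rightarrow> 'a. continuous_on {0<..<1} \<gamma> \<and>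
               \<gamma> ` {0<..<1} \<subseteq> D - {x0} \<and>
               (\<exists>t :: nat \<Rightarrow> real. (\<forall>k. t k \<in> {0<..<1}) \<and> t \<longlonglongrightarrow> 0 \<and>
                   (\<lambda>k. \<gamma> (t k)) \<longlonglongrightarrow> x0)}) = 0"
proof -
  have apos: "\<alpha> > 0" using alpha by simp
  have a'pos: "\<alpha>' > 0" using alpha' by simp
  have Ms: "sets \<mu>' = sets borel" using mu' by (simp add: loc_finite_borel_def)
  define r where "r m = \<epsilon>0 / real (Suc m)" for m
  have r: "0 < r m" "r m \<le> \<epsilon>0" for m
    using eps0 by (auto simp: r_def divide_le_eq)
  define G where "G m = (\<lambda>\<gamma>. f \<circ> \<gamma>) ` {\<gamma> :: real \<Rightarrow> 'a. continuous_on {0<..<1} \<gamma> \<and>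
               \<gamma> ` {0<..<1} \<subseteq> D - {x0} \<and>
               (\<exists>t :: nat \<Rightarrow> real. (\<forall>k. t k \<in> {0<..<1}) \<and> t \<longlonglongrightarrow> 0 \<and>
                   (\<lambda>k. \<gamma> (t k)) \<longlonglongrightarrow> x0) \<and> (\<exists>s\<in>{0<..<1}. r m < dist (\<gamma> s) x0)}" for m
  have G0: "modulus \<mu>' \<alpha>' {0<..<1} (G m) = 0" for m
  proof -
    have *: "modulus \<mu>' \<alpha>' {0<..<1} (G m) \<le> 0 + ennreal e" if e: "e > 0" for e
    proof -
      obtain r1 where r1: "0 < r1" "r1 < r m" and le: "modulus \<mu>' \<alpha>' {0..1} ((\<lambda>\<gamma>. f \<circ> \<gamma>) `
         {\<gamma> \<in> curves_between (sphere_at x0 r1) (sphere_at x0 (r m)) (annulus x0 r1 (r m)). \<gamma> ` {0..1} \<subseteq> D - {x0}})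
         \<le> ennreal e"
        using ring_small[OF ring apos eps0 psi I_pos little_o r(1)[of m] r(2)[of m] e] by blast
      have "modulus \<mu>' \<alpha>' {0<..<1} (G m) \<le> modulus \<mu>' \<alpha>' {0..1} ((\<lambda>\<gamma>. f \<circ> \<gamma>) `
         {\<gamma> \<in> curves_between (sphere_at x0 r1) (sphere_at x0 (r m)) (annulus x0 r1 (r m)). \<gamma> ` {0..1} \<subseteq> D - {x0}})"
        unfolding G_def by (rule modulus_mono_adm) (rule adm_transfer[OF r1])
      also note le
      finally show ?thesis by simp
    qed
    have "modulus \<mu>' \<alpha>' {0<..<1} (G m) \<le> 0" by (rule ennreal_le_epsilon) (rule *; simp)
    then show ?thesis by simp
  qed
  have U0: "modulus \<mu>' \<alpha>' {0<..<1} (\<Union>m. G m) = 0"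
    by (rule modulus_Union_zero[OF a'pos G0 Ms])
  have sub: "(\<lambda>\<gamma>. f \<circ> \<gamma>) ` {\<gamma> :: real \<Rightarrow> 'a. continuous_on {0<..<1} \<gamma> \<and>
               \<gamma> ` {0<..<1} \<subseteq> D - {x0} \<and>
               (\<exists>t :: nat \<Rightarrow> real. (\<forall>k. t k \<in> {0<..<1}) \<and> t \<longlonglongrightarrow> 0 \<and>
                   (\<lambda>k. \<gamma> (t k)) \<longlonglongrightarrow> x0)} \<subseteq> (\<Union>m. G m)"
  proof
    fix g assume "g \<in> (\<lambda>\<gamma>. f \<circ> \<gamma>) ` {\<gamma> :: real \<Rightarrow> 'a. continuous_on {0<..<1} \<gamma> \<and>
               \<gamma> ` {0<..<1} \<subseteq> D - {x0} \<and>
               (\<exists>t :: nat \<Rightarrow> real. (\<forall>k. t k \<in> {0<..<1}) \<and> t \<longlonglongrightarrow> 0 \<and>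
                   (\<lambda>k. \<gamma> (t k)) \<longlonglongrightarrow> x0)}"
    then obtain \<gamma> where g: "g = f \<circ> \<gamma>" and \<gamma>: "continuous_on {0<..<1} \<gamma>"
               "\<gamma> ` {0<..<1} \<subseteq> D - {x0}"
               "\<exists>t :: nat \<Rightarrow> real. (\<forall>k. t k \<in> {0<..<1}) \<and> t \<longlonglongrightarrow> 0 \<and>
                   (\<lambda>k. \<gamma> (t k)) \<longlonglongrightarrow> x0" by blast
    have h: "(1/2::real) \<in> {0<..<1}" by simp
    then have "\<gamma> (1/2) \<noteq> x0" using \<gamma>(2) by blast
    then have dpos: "0 < dist (\<gamma> (1/2)) x0" by simp
    obtain n :: nat where n: "\<epsilon>0 / dist (\<gamma> (1/2)) x0 < real n" using reals_Archimedean2 by blast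
    have "\<epsilon>0 < dist (\<gamma> (1/2)) x0 * real n" using n dpos by (simp add: divide_less_eq mult.commute)
    also have "\<dots> \<le> dist (\<gamma> (1/2)) x0 * real (Suc n)" using dpos by (intro mult_left_mono) auto
    finally have "r n < dist (\<gamma> (1/2)) x0" unfolding r_def by (simp add: divide_less_eq mult.commute)
    then have "g \<in> G n" unfolding G_def using g \<gamma> h by blast
    then show "g \<in> (\<Union>m. G m)" by blast
  qed
  have "modulus \<mu>' \<alpha>' {0<..<1}
           ((\<lambda>\<gamma>. f \<circ> \<gamma>) ` {\<gamma> :: real \<Rightarrow> 'a. continuous_on {0<..<1} \<gamma> \<and>
               \<gamma> ` {0<..<1} \<subseteq> D - {x0} \<and>
               (\<exists>t :: nat \<Rightarrow> real. (\<forall>k. t k \<in> {0<..<1}) \<and> t \<longlonglongrightarrow> 0 \<and>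
                   (\<lambda>k. \<gamma> (t k)) \<longlonglongrightarrow> x0)}) \<le> modulus \<mu>' \<alpha>' {0<..<1} (\<Union>m. G m)"
    by (rule modulus_mono_adm) (rule admissible_subset[OF sub])
  then show ?thesis using U0 by simp
qed

end
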